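(* Let $J\in\mathbb{N}_0$ and let $(a_j)_{j>J}$ be complex numbers with $\sum_{j>J}|a_j|<\infty$ and $|a_j|\ge|a_{j+1}|>0$ for all integers $j>J$. Suppose there is a convex function $\varphi\colon\,]J,\infty[\,\to\mathbb{R}$ with $\varphi(j)=j/|a_j|$ for every integer $j>J$. Then the functions $$f(t)=\sum_{j>J}a_j\exp(i t j/|a_j|),\qquad \operatorname{Re}f(t),\qquad \operatorname{Im}f(t)$$ are continuous on $\mathbb{R}$ but differentiable at no point of $\mathbb{R}$.
   Context: Sums over $j>J$ range over integers $j>J$. *)

theory Defs
  imports "HOL-Analysis.Analysis"
begin

definition nd_series :: "nat \<Rightarrow> (nat \<Rightarrow> complex) \<Rightarrow> real \<Rightarrow> complex" where
  "nd_series J a t = (\<Sum>\<^sub>\<infinity> j\<in>{J<..}. a j * exp (\<i> * complex_of_real (t * real j / norm (a j))))"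

end

theory Submission
  imports Defs
begin


definition ts :: "nat set \<Rightarrow> (nat\<Rightarrow>complex) \<Rightarrow> (nat\<Rightarrow>real) \<Rightarrow> (nat\<Rightarrow>complex) \<Rightarrow> (nat\<Rightarrow>real) \<Rightarrow> real \<Rightarrow> complex" where
  "ts X g \<nu> g' \<nu>' h = (\<Sum>\<^sub>\<infinity>j\<in>X. g j * cis (\<nu> j * h) + g' j * cis (\<nu>' j * h))"

definition csum :: "nat set \<Rightarrow> (nat\<Rightarrow>complex) \<Rightarrow> (nat\<Rightarrow>complex) \<Rightarrow> bool" where
  "csum X g g' \<longleftrightarrow> (\<lambda>j. norm (g j) + norm (g' j)) summable_on X"

lemma term_norm_le: "norm (g * cis a + g' * cis b) \<le> norm g + norm g'"
  by (rule order_trans[OF norm_triangle_ineq]) (simp add: norm_mult)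

lemma ts_term_summable:
  assumes "csum X g g'"
  shows "(\<lambda>j. g j * cis (\<nu> j * h) + g' j * cis (\<nu>' j * h)) summable_on X"
proof -
  have "(\<lambda>j. norm (g j * cis (\<nu> j * h) + g' j * cis (\<nu>' j * h))) summable_on X"
    by (rule Infinite_Sum.abs_summable_on_comparison_test'[OF assms[unfolded csum_def]]) (rule term_norm_le)
  then show ?thesis by (rule Infinite_Sum.abs_summable_summable)
qed

lemma csum_mono:
  assumes "csum X g g'" "C \<ge> 0"
    and "\<And>j. j \<in> X \<Longrightarrow> norm (G j) \<le> C * norm (g j)"
    and "\<And>j. j \<in> X \<Longrightarrow> norm (G' j) \<le> C * norm (g' j)"
  shows "csum X G G'"
proof -
  have s: "(\<lambda>j. C * (norm (g j) + norm (g' j))) summable_on X"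
    using assms(1) unfolding csum_def by (rule summable_on_cmult_right)
  show ?thesis unfolding csum_def
    apply (rule summable_on_comparison_test[OF s])
    using assms(3,4) by (auto simp: algebra_simps add_mono)
qed

lemma ts_uniform:
  assumes "csum X g g'"
  shows "uniform_limit Y (\<lambda>Z x. \<Sum>j\<in>Z. g j * cis (\<nu> j * (h + x)) + g' j * cis (\<nu>' j * (h + x)))
     (\<lambda>x. ts X g \<nu> g' \<nu>' (h + x)) (finite_subsets_at_top X)"
  unfolding ts_def
  by (rule Weierstrass_m_test_general[where M = "\<lambda>j. norm (g j) + norm (g' j)"])
     (use assms in \<open>auto simp: csum_def intro: term_norm_le\<close>)

lemma ts_cont:
  assumes "csum X g g'"
  shows "continuous_on UNIV (ts X g \<nu> g' \<nu>')"
proof -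
  have "continuous_on UNIV (\<lambda>x. ts X g \<nu> g' \<nu>' (0 + x))"
    by (rule uniform_limit_theorem[OF _ ts_uniform[OF assms]])
       (auto intro!: always_eventually continuous_intros)
  then show ?thesis by simp
qed

definition mm :: "real \<Rightarrow> complex" where
  "mm x = (if x = 0 then 1 else (cis x - 1) / (\<i> * of_real x))"

lemma cis_integral:
  assumes T: "T > 0"
  shows "((\<lambda>x. cis (\<nu> * (h + x))) has_integral (of_real T * mm (\<nu> * T) * cis (\<nu> * h))) {0..T}"
proof (cases "\<nu> = 0")
  case True
  then show ?thesis using has_integral_const_real[of "1::complex" 0 T] T
    by (simp add: mm_def scaleR_conv_of_real)
next
  case False
  have d: "((\<lambda>x. cis (\<nu> * (h + x)) / (\<i> * of_real \<nu>)) has_vector_derivative cis (\<nu> * (h + x))) (at x within {0..T})" for x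
  proof -
    have "((\<lambda>x. cis (\<nu> * (h + x))) has_derivative (\<lambda>t. (\<nu> * t) *\<^sub>R (\<i> * cis (\<nu> * (h + x))))) (at x within {0..T})"
      by (rule has_derivative_cis) (auto intro!: derivative_eq_intros)
    then have "((\<lambda>x. cis (\<nu> * (h + x)) * inverse (\<i> * of_real \<nu>)) has_derivative (\<lambda>t. (\<nu> * t) *\<^sub>R (\<i> * cis (\<nu> * (h + x))) * inverse (\<i> * of_real \<nu>))) (at x within {0..T})"
      by (rule has_derivative_mult_left)
    then show ?thesis unfolding has_vector_derivative_def
      using False by (simp add: divide_inverse) (rule has_derivative_eq_rhs, auto simp: fun_eq_iff scaleR_conv_of_real field_simps)
  qed
  have "((\<lambda>x. cis (\<nu> * (h + x))) has_integral (cis (\<nu> * (h + T)) / (\<i> * of_real \<nu>) - cis (\<nu> * (h + 0)) / (\<i> * of_real \<nu>))) {0..T}"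
    by (rule fundamental_theorem_of_calculus) (use T d in auto)
  moreover have "cis (\<nu> * (h + T)) / (\<i> * of_real \<nu>) - cis (\<nu> * (h + 0)) / (\<i> * of_real \<nu>) = of_real T * mm (\<nu> * T) * cis (\<nu> * h)"
    using False T by (simp add: mm_def distrib_left cis_mult[symmetric] field_simps)
  ultimately show ?thesis by simp
qed

lemma mm_norm_le1: "norm (mm x) \<le> 1"
proof (cases "x = 0")
  case True then show ?thesis by (simp add: mm_def)
next
  case False
  have T: "\<bar>x\<bar> > 0" using False by simp
  have e: "x / \<bar>x\<bar> * \<bar>x\<bar> = x" using False by simp
  have "((\<lambda>y. cis (x / \<bar>x\<bar> * (0 + y))) has_integral (of_real \<bar>x\<bar> * mm x * cis (x / \<bar>x\<bar> * 0))) {0..\<bar>x\<bar>}"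
    using cis_integral[OF T, of "x / \<bar>x\<bar>" 0] by (simp only: e)
  note hi = this
  have "norm (of_real \<bar>x\<bar> * mm x * cis (x / \<bar>x\<bar> * 0)) \<le> 1 * Henstock_Kurzweil_Integration.content {0..\<bar>x\<bar>}"
    by (rule has_integral_bound_real[where S="{}", OF _ _ hi]) auto
  then show ?thesis using T by (simp add: norm_mult)
qed

lemma mm_norm_le2: assumes "x \<noteq> 0" shows "norm (mm x) \<le> 2 / \<bar>x\<bar>"
proof -
  have "norm (cis x - 1) \<le> 2" by (rule order_trans[OF norm_triangle_ineq4]) simp
  then show ?thesis using assms by (simp add: mm_def norm_divide norm_mult divide_right_mono)
qed

lemma mm_0 [simp]: "mm 0 = 1" by (simp add: mm_def)

lemma ts_Av:
  assumes cs: "csum X g g'" and T: "T > 0"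
  shows "integral {0..T} (\<lambda>x. ts X g \<nu> g' \<nu>' (h + x)) / of_real T
       = ts X (\<lambda>j. g j * mm (\<nu> j * T)) \<nu> (\<lambda>j. g' j * mm (\<nu>' j * T)) \<nu>' h"
proof -
  define nt where "nt j = g j * mm (\<nu> j * T) * cis (\<nu> j * h) + g' j * mm (\<nu>' j * T) * cis (\<nu>' j * h)" for j
  obtain I Jv where I: "\<And>Z. ((\<lambda>x. \<Sum>j\<in>Z. g j * cis (\<nu> j * (h + x)) + g' j * cis (\<nu>' j * (h + x))) has_integral I Z) {0..T}"
    and Jv: "((\<lambda>x. ts X g \<nu> g' \<nu>' (h + x)) has_integral Jv) {0..T}"
    and lim: "(I \<longlongrightarrow> Jv) (finite_subsets_at_top X)"
    by (rule uniform_limit_integral[OF ts_uniform[OF cs, where Y="{0..T}" and \<nu>=\<nu> and h=h and \<nu>'=\<nu>']]) (auto intro!: continuous_intros)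
  have one: "((\<lambda>x. g j * cis (\<nu> j * (h + x)) + g' j * cis (\<nu>' j * (h + x))) has_integral (of_real T * nt j)) {0..T}" for j
  proof -
    have "((\<lambda>x. g j * cis (\<nu> j * (h + x)) + g' j * cis (\<nu>' j * (h + x))) has_integral
       (g j * (of_real T * mm (\<nu> j * T) * cis (\<nu> j * h)) + g' j * (of_real T * mm (\<nu>' j * T) * cis (\<nu>' j * h)))) {0..T}"
      by (intro has_integral_add has_integral_mult_right cis_integral T)
    then show ?thesis by (simp add: nt_def algebra_simps)
  qed
  have IZ: "I Z = (\<Sum>j\<in>Z. of_real T * nt j)" if "finite Z" for Z
  proof -
    have "((\<lambda>x. \<Sum>j\<in>Z. g j * cis (\<nu> j * (h + x)) + g' j * cis (\<nu>' j * (h + x))) has_integral (\<Sum>j\<in>Z. of_real T * nt j)) {0..T}"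
      by (rule has_integral_sum[OF that]) (rule one)
    then show ?thesis using I[of Z] by (rule has_integral_unique[symmetric])
  qed
  have "((\<lambda>j. of_real T * nt j) has_sum Jv) X"
    unfolding has_sum_def
    by (rule tendsto_cong[THEN iffD1, OF _ lim])
       (auto intro!: eventually_finite_subsets_at_top_weakI simp: IZ)
  then have "((\<lambda>j. inverse (of_real T) * (of_real T * nt j)) has_sum (inverse (of_real T) * Jv)) X"
    by (rule has_sum_cmult_right)
  then have "(nt has_sum (Jv / of_real T)) X" using T by (simp add: field_simps)
  then have "ts X (\<lambda>j. g j * mm (\<nu> j * T)) \<nu> (\<lambda>j. g' j * mm (\<nu>' j * T)) \<nu>' h = Jv / of_real T"
    unfolding ts_def nt_def by (simp add: infsumI mult.assoc)
  moreover have "integral {0..T} (\<lambda>x. ts X g \<nu> g' \<nu>' (h + x)) = Jv" using Jv by (rule integral_unique)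
  ultimately show ?thesis by simp
qed

lemma csum_Av: "csum X g g' \<Longrightarrow> csum X (\<lambda>j. g j * mm (\<nu> j * T)) (\<lambda>j. g' j * mm (\<nu>' j * T))"
  by (rule csum_mono[where C=1]) (auto simp: norm_mult intro!: mult_left_le[OF mm_norm_le1])

lemma ts_Pf:
  assumes cs: "csum X g g'"
  shows "ts X g \<nu> g' \<nu>' (h + s) + ts X g \<nu> g' \<nu>' h
       = ts X (\<lambda>j. g j * (cis (\<nu> j * s) + 1)) \<nu> (\<lambda>j. g' j * (cis (\<nu>' j * s) + 1)) \<nu>' h"
  unfolding ts_def
  apply (subst infsum_add[symmetric])
    apply (rule ts_term_summable[OF cs])
   apply (rule ts_term_summable[OF cs])
  apply (rule infsum_cong)
  apply (simp add: distrib_left cis_mult[symmetric] algebra_simps)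
  done

fun PP :: "real list \<Rightarrow> (real \<Rightarrow> complex) \<Rightarrow> real \<Rightarrow> complex" where
  "PP [] u = u"
| "PP (s # S) u = (\<lambda>h. PP S u (h + s) + PP S u h)"

definition Pm :: "real list \<Rightarrow> real \<Rightarrow> complex" where
  "Pm S \<nu> = prod_list (map (\<lambda>s. cis (\<nu> * s) + 1) S)"

lemma Pm_Cons [simp]: "Pm (s # S) \<nu> = (cis (\<nu> * s) + 1) * Pm S \<nu>"
  by (simp add: Pm_def)

lemma Pm_Nil [simp]: "Pm [] \<nu> = 1"
  by (simp add: Pm_def)

lemma Pm_norm: "norm (Pm S \<nu>) \<le> 2 ^ length S"
proof (induction S)
  case Nil then show ?case by simp
next
  case (Cons s S)
  have "norm (cis (\<nu> * s) + 1) \<le> 2" by (rule order_trans[OF norm_triangle_ineq]) simp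
  then show ?case using Cons by (simp add: norm_mult mult_mono)
qed

lemma Pm_zero: "s \<in> set S \<Longrightarrow> cis (\<nu> * s) = -1 \<Longrightarrow> Pm S \<nu> = 0"
  by (induction S) auto

lemma Pm_at0: "Pm S 0 = 2 ^ length S"
  by (induction S) auto

lemma csum_Pm: "csum X g g' \<Longrightarrow> csum X (\<lambda>j. g j * Pm S (\<nu> j)) (\<lambda>j. g' j * Pm S (\<nu>' j))"
  by (rule csum_mono[where C="2 ^ length S"]) (auto simp: norm_mult mult.commute intro!: mult_left_mono Pm_norm)

lemma PP_ts:
  assumes "csum X g g'"
  shows "PP S (ts X g \<nu> g' \<nu>') = ts X (\<lambda>j. g j * Pm S (\<nu> j)) \<nu> (\<lambda>j. g' j * Pm S (\<nu>' j)) \<nu>'"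
proof (induction S)
  case Nil then show ?case by simp
next
  case (Cons s S)
  show ?case
  proof (rule ext)
    fix h
    have "PP (s # S) (ts X g \<nu> g' \<nu>') h = ts X (\<lambda>j. g j * Pm S (\<nu> j)) \<nu> (\<lambda>j. g' j * Pm S (\<nu>' j)) \<nu>' (h + s)
        + ts X (\<lambda>j. g j * Pm S (\<nu> j)) \<nu> (\<lambda>j. g' j * Pm S (\<nu>' j)) \<nu>' h"
      by (simp add: Cons)
    also have "\<dots> = ts X (\<lambda>j. g j * Pm S (\<nu> j) * (cis (\<nu> j * s) + 1)) \<nu> (\<lambda>j. g' j * Pm S (\<nu>' j) * (cis (\<nu>' j * s) + 1)) \<nu>' h"
      by (rule ts_Pf[OF csum_Pm[OF assms]])
    also have "\<dots> = ts X (\<lambda>j. g j * Pm (s # S) (\<nu> j)) \<nu> (\<lambda>j. g' j * Pm (s # S) (\<nu>' j)) \<nu>' h"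
      by (simp only: Pm_Cons ac_simps)
    finally show "PP (s # S) (ts X g \<nu> g' \<nu>') h = ts X (\<lambda>j. g j * Pm (s # S) (\<nu> j)) \<nu> (\<lambda>j. g' j * Pm (s # S) (\<nu>' j)) \<nu>' h" .
  qed
qed

lemma PP_add: "PP S (\<lambda>h. u h + v h) = (\<lambda>h. PP S u h + PP S v h)"
  by (induction S) (auto simp: fun_eq_iff)

lemma PP_zero: "PP S (\<lambda>h. 0) = (\<lambda>h. 0)"
  by (induction S) (auto simp: fun_eq_iff)

lemma PP_append: "PP (S1 @ S2) u = PP S1 (PP S2 u)"
  by (induction S1) auto

lemma PP_bound:
  assumes "\<forall>s\<in>set S. s \<ge> 0"
    and "\<And>x. h \<le> x \<Longrightarrow> x \<le> h + sum_list S \<Longrightarrow> norm (u x) \<le> M"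
  shows "norm (PP S u h) \<le> 2 ^ length S * M"
  using assms
proof (induction S arbitrary: h)
  case Nil then show ?case by simp
next
  case (Cons s S)
  have s0: "s \<ge> 0" and S0: "\<forall>s\<in>set S. s \<ge> 0" using Cons.prems by auto
  have sS: "sum_list S \<ge> 0" using S0 by (simp add: sum_list_nonneg)
  have a: "norm (PP S u (h + s)) \<le> 2 ^ length S * M"
    by (rule Cons.IH[OF S0]) (use Cons.prems(2) s0 in auto)
  have b: "norm (PP S u h) \<le> 2 ^ length S * M"
    by (rule Cons.IH[OF S0]) (use Cons.prems(2) s0 in auto)
  show ?case using norm_triangle_ineq[of "PP S u (h + s)" "PP S u h"] a b by simp
qed

lemma av_bound:
  fixes u :: "real \<Rightarrow> complex"
  assumes u: "continuous_on UNIV u" and T: "T > 0"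
    and b: "\<And>x. h \<le> x \<Longrightarrow> x \<le> h + T \<Longrightarrow> norm (u x) \<le> M"
  shows "norm (integral {0..T} (\<lambda>x. u (h + x)) / of_real T) \<le> M"
proof -
  have M: "M \<ge> 0" using b[of h] T by (meson less_eq_real_def norm_ge_zero order_trans add_increasing2 order_refl)
  have "continuous_on {0..T} (\<lambda>x. u (h + x))"
    by (rule continuous_on_compose2[OF u]) (auto intro!: continuous_intros)
  then have "(\<lambda>x. u (h + x)) integrable_on {0..T}"
    by (rule integrable_continuous_interval)
  then have hi: "((\<lambda>x. u (h + x)) has_integral integral {0..T} (\<lambda>x. u (h + x))) {0..T}"
    by (rule integrable_integral)
  have "norm (integral {0..T} (\<lambda>x. u (h + x))) \<le> M * Henstock_Kurzweil_Integration.content {0..T}"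
    by (rule has_integral_bound_real[where S="{}", OF M _ hi]) (use b in auto)
  then show ?thesis using T by (simp add: norm_divide pos_divide_le_eq)
qed

lemma kill_lin:
  assumes "cis (- L * s0) = -1"
  shows "PP [s0, s0] (\<lambda>h. (A + of_real h * D) * cis (- L * h)) = (\<lambda>h. 0)"
proof -
  have r: "cis (- L * (x + s0)) = - cis (- L * x)" for x
  proof -
    have "- L * (x + s0) = - L * x + - L * s0" by algebra
    then have "cis (- L * (x + s0)) = cis (- L * x) * cis (- L * s0)" by (simp only: cis_mult)
    then show ?thesis using assms by simp
  qed
  show ?thesis
  proof (rule ext)
    fix h
    have r1: "cis (- L * (h + s0 + s0)) = cis (- L * h)" using r[of "h + s0"] r[of h] by simp
    have r2: "cis (- L * (h + s0)) = - cis (- L * h)" by (rule r)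
    have "PP [s0, s0] (\<lambda>h. (A + of_real h * D) * cis (- L * h)) h
       = (A + of_real (h + s0 + s0) * D) * cis (- L * (h + s0 + s0)) + (A + of_real (h + s0) * D) * cis (- L * (h + s0))
         + ((A + of_real (h + s0) * D) * cis (- L * (h + s0)) + (A + of_real h * D) * cis (- L * h))"
      by simp
    also have "\<dots> = 0" unfolding r1 r2 by (simp add: algebra_simps)
    finally show "PP [s0, s0] (\<lambda>h. (A + of_real h * D) * cis (- L * h)) h = 0" .
  qed
qed



definition qq :: "nat \<Rightarrow> real" where "qq i = (if i = 0 then 0 else 1 / (real i)\<^sup>2)"

lemma qq_nonneg: "qq i \<ge> 0" by (simp add: qq_def)

lemma qq_sum_aux: "(\<Sum>i<M + 2. qq i) \<le> 2 - 1 / (real M + 1)"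
proof (induction M)
  case 0 then show ?case by (simp add: qq_def numeral_2_eq_2)
next
  case (Suc M)
  have "(\<Sum>i<Suc M + 2. qq i) = (\<Sum>i<M + 2. qq i) + qq (M + 2)" by simp
  also have "\<dots> \<le> 2 - 1 / (real M + 1) + 1 / (real M + 2)\<^sup>2"
  proof -
    have "qq (M + 2) = 1 / (real M + 2)\<^sup>2" by (simp add: qq_def)
    then show ?thesis using Suc.IH by linarith
  qed
  also have "\<dots> \<le> 2 - 1 / (real (Suc M) + 1)"
  proof -
    have e: "1 / (real M + 1) - 1 / (real M + 2) = 1 / ((real M + 1) * (real M + 2))"
      by (simp add: field_simps)
    have "1 / (real M + 2)\<^sup>2 \<le> 1 / ((real M + 1) * (real M + 2))"
      by (rule divide_left_mono) (auto simp: power2_eq_square intro!: mult_right_mono)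
    then have "1 / (real M + 2)\<^sup>2 \<le> 1 / (real M + 1) - 1 / (real M + 2)" by (simp only: e)
    moreover have "real (Suc M) + 1 = real M + 2" by simp
    ultimately show ?thesis by (simp only:)
  qed
  finally show ?case .
qed

lemma qq_sum: "(\<Sum>i<N. qq i) \<le> 2"
proof -
  have "(\<Sum>i<N. qq i) \<le> (\<Sum>i<N + 2. qq i)"
    by (rule sum_mono2) (auto simp: qq_nonneg)
  also have "\<dots> \<le> 2 - 1 / (real N + 1)" by (rule qq_sum_aux)
  also have "\<dots> \<le> 2" by simp
  finally show ?thesis .
qed

lemma qq_sum_Suc: "(\<Sum>i<N. qq (Suc i)) \<le> 2"
proof -
  have "(\<Sum>i<Suc N. qq i) = qq 0 + (\<Sum>i<N. qq (Suc i))" by (rule sum.lessThan_Suc_shift)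
  then show ?thesis using qq_sum[of "Suc N"] by (simp add: qq_def)
qed

lemma sum_split_add: "(\<Sum>j<n + N. f j) = (\<Sum>j<n. f j) + (\<Sum>i<N. f (n + i))" for f :: "nat \<Rightarrow> real"
  by (induction N) auto

definition ww :: "nat \<Rightarrow> nat \<Rightarrow> real" where
  "ww n j = (if j = n then 0 else 2 / (real j - real n)\<^sup>2) + 1 / (real j + real n)\<^sup>2"

lemma ww_nonneg: "ww n j \<ge> 0" by (simp add: ww_def)

lemma ww_sum:
  assumes n: "n \<ge> 1"
  shows "(\<Sum>j<N. ww n j) \<le> 10"
proof -
  define f where "f j = (if j = n then 0 else 1 / (real j - real n)\<^sup>2)" for j
  have f0: "f j \<ge> 0" for j by (simp add: f_def)
  have s1: "(\<Sum>j<N. 1 / (real j + real n)\<^sup>2) \<le> 2"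
  proof -
    have "(\<Sum>j<N. 1 / (real j + real n)\<^sup>2) \<le> (\<Sum>j<N. qq (Suc j))"
    proof (rule sum_mono)
      fix j assume "j \<in> {..<N}"
      have "(real j + 1)\<^sup>2 \<le> (real j + real n)\<^sup>2" using n by (intro power_mono) auto
      then show "1 / (real j + real n)\<^sup>2 \<le> qq (Suc j)"
        by (simp add: qq_def frac_le add.commute)
    qed
    then show ?thesis using qq_sum_Suc[of N] by simp
  qed
  have s2: "(\<Sum>j<N. f j) \<le> 4"
  proof -
    have "(\<Sum>j<N. f j) \<le> (\<Sum>j<n + N. f j)" by (rule sum_mono2) (auto simp: f0)
    also have "\<dots> = (\<Sum>j<n. f j) + (\<Sum>i<N. f (n + i))" by (rule sum_split_add)
    also have "(\<Sum>j<n. f j) = (\<Sum>i<n. f (n - Suc i))" by (rule sum.nat_diff_reindex[symmetric])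
    also have "\<dots> = (\<Sum>i<n. qq (Suc i))"
    proof (rule sum.cong)
      fix i assume "i \<in> {..<n}"
      then have "real (n - Suc i) - real n = - (real i + 1)" by (simp add: of_nat_diff)
      then have "real (n - Suc i) - real n = - real (Suc i)" by simp
      then have "(real (n - Suc i) - real n)\<^sup>2 = (real (Suc i))\<^sup>2" by (simp only: power2_minus)
      then show "f (n - Suc i) = qq (Suc i)" using \<open>i \<in> {..<n}\<close>
        by (auto simp: f_def qq_def)
    qed simp
    also have "(\<Sum>i<N. f (n + i)) = (\<Sum>i<N. qq i)"
      by (rule sum.cong) (auto simp: f_def qq_def)
    finally show ?thesis using qq_sum_Suc[of n] qq_sum[of N] by simp
  qed
  have "ww n j = 2 * f j + 1 / (real j + real n)\<^sup>2" for j by (simp add: ww_def f_def)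
  then have "(\<Sum>j<N. ww n j) = (\<Sum>j<N. 2 * f j + 1 / (real j + real n)\<^sup>2)" by simp
  also have "\<dots> = 2 * (\<Sum>j<N. f j) + (\<Sum>j<N. 1 / (real j + real n)\<^sup>2)"
    by (simp add: sum.distrib sum_distrib_left)
  finally have "(\<Sum>j<N. ww n j) = 2 * (\<Sum>j<N. f j) + (\<Sum>j<N. 1 / (real j + real n)\<^sup>2)" .
  then show ?thesis using s1 s2 by simp
qed

lemma ww_summable:
  assumes "n \<ge> 1"
  shows "ww n summable_on X" and "(\<Sum>\<^sub>\<infinity>j\<in>X. ww n j) \<le> 10"
proof -
  have fin: "sum (ww n) F \<le> 10" if "finite F" for F
  proof -
    obtain N where "F \<subseteq> {..<N}" using \<open>finite F\<close> finite_nat_bounded by blast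
    then have "sum (ww n) F \<le> sum (ww n) {..<N}" by (intro sum_mono2) (auto simp: ww_nonneg)
    also have "\<dots> \<le> 10" using ww_sum[OF assms] by simp
    finally show ?thesis .
  qed
  show s: "ww n summable_on X"
    by (rule nonneg_bdd_above_summable_on) (auto simp: ww_nonneg bdd_above_def intro!: exI[of _ 10] fin)
  show "(\<Sum>\<^sub>\<infinity>j\<in>X. ww n j) \<le> 10"
    by (rule infsum_le_finite_sums[OF s fin])
qed



lemma gen_bound:
  assumes "norm c \<le> A" "norm P \<le> 2 ^ k" "x\<^sup>2 \<ge> 576 * d\<^sup>2" "d > 0"
  shows "norm (c * P * mm x * mm x) \<le> A * 2 ^ k / (144 * d\<^sup>2)"
proof -
  have x0: "x \<noteq> 0" using assms(3,4) by auto
  have m: "norm (mm x) \<le> 2 / \<bar>x\<bar>" by (rule mm_norm_le2[OF x0])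
  have A0: "A \<ge> 0" using assms(1) norm_ge_zero order_trans by blast
  have "norm (c * P * mm x * mm x) = norm c * norm P * (norm (mm x) * norm (mm x))"
    by (simp add: norm_mult)
  also have "\<dots> \<le> A * 2 ^ k * ((2 / \<bar>x\<bar>) * (2 / \<bar>x\<bar>))"
    by (intro mult_mono assms(1,2) m) (auto simp: A0)
  also have "(2 / \<bar>x\<bar>) * (2 / \<bar>x\<bar>) = 4 / x\<^sup>2" by (simp add: power2_eq_square)
  also have "4 / x\<^sup>2 \<le> 4 / (576 * d\<^sup>2)"
  proof (rule divide_left_mono)
    have "d\<^sup>2 > 0" using assms(4) by simp
    moreover have "x\<^sup>2 > 0" using x0 by simp
    ultimately show "0 < x\<^sup>2 * (576 * d\<^sup>2)" by simp
  qed (use assms(3) in auto)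
  also have "4 / (576 * d\<^sup>2) = 1 / (144 * d\<^sup>2)" by simp
  finally have "norm (c * P * mm x * mm x) \<le> A * 2 ^ k * (1 / (144 * d\<^sup>2))"
    by (simp add: A0 mult_left_mono)
  then show ?thesis by simp
qed

lemma sum_list_map_le: "(\<And>x. x \<in> set xs \<Longrightarrow> f x \<le> c) \<Longrightarrow> sum_list (map f xs) \<le> real (length xs) * c"
proof (induction xs)
  case Nil then show ?case by simp
next
  case (Cons a xs)
  have "f a \<le> c" using Cons.prems by simp
  moreover have "sum_list (map f xs) \<le> real (length xs) * c" using Cons by simp
  ultimately show ?case by (simp add: algebra_simps)
qed

lemma cis_minus_pi: "cis (- pi) = -1"
  by (simp add: complex_eq_iff)



lemma core:
  fixes J :: nat and a \<alpha> \<beta> :: "nat \<Rightarrow> complex" and lam :: "nat \<Rightarrow> real" and F :: "real \<Rightarrow> complex" and t0 :: real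
  assumes summ: "(\<lambda>j. norm (a j)) summable_on {J<..}"
    and mono: "\<And>j. j > J \<Longrightarrow> norm (a j) \<ge> norm (a (Suc j)) \<and> norm (a (Suc j)) > 0"
    and lam: "\<And>j. lam j = real j / norm (a j)"
    and al: "\<And>j. j > J \<Longrightarrow> norm (\<alpha> j) \<le> norm (a j)"
    and bl: "\<And>j. j > J \<Longrightarrow> norm (\<beta> j) \<le> norm (a j)"
    and ag: "\<And>j. j > J \<Longrightarrow> norm (a j) \<le> 2 * norm (\<alpha> j)"
    and Fd: "\<And>t. F t = (\<Sum>\<^sub>\<infinity>j\<in>{J<..}. \<alpha> j * cis (lam j * t) + \<beta> j * cis (- lam j * t))"
  shows "\<not> F differentiable (at t0)"
proof
  assume dif: "F differentiable (at t0)"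
  define X where "X = {J<..}"
  have pos: "norm (a j) > 0" if "j > J" for j
    using mono[OF that] by linarith
  have anti: "norm (a j) \<le> norm (a i)" if "J < i" "i \<le> j" for i j
    using that(2)
  proof (induction j rule: dec_induct)
    case base then show ?case by simp
  next
    case (step m)
    then show ?case using mono[of m] that(1) by linarith
  qed
  define D where "D = vector_derivative F (at t0)"
  have "(F has_derivative (\<lambda>x. x *\<^sub>R D)) (at t0)"
    using dif unfolding D_def vector_derivative_works has_vector_derivative_def .
  then obtain \<eta> where \<eta>: "\<eta> > 0"
    and der: "\<And>y. norm (y - t0) < \<eta> \<Longrightarrow> norm (F y - F t0 - (y - t0) *\<^sub>R D) \<le> 1/1000 * norm (y - t0)"
    unfolding has_derivative_at_alt by (metis divide_pos_pos zero_less_numeral zero_less_one)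
  have "\<exists>n>J. 64 * norm (a n) < \<eta>"
  proof (rule ccontr)
    assume "\<not> ?thesis"
    then have big: "norm (a j) \<ge> \<eta> / 64" if "j > J" for j using that by fastforce
    define Sm where "Sm = (\<Sum>\<^sub>\<infinity>j\<in>{J<..}. norm (a j))"
    obtain N :: nat where N: "real N > Sm / (\<eta> / 64)" using reals_Archimedean2 by blast
    have "sum (\<lambda>j. norm (a j)) {J<..J+N} \<le> Sm"
      unfolding Sm_def by (rule finite_sum_le_infsum[OF summ]) auto
    moreover have "sum (\<lambda>j. norm (a j)) {J<..J+N} \<ge> sum (\<lambda>j. \<eta> / 64) {J<..J+N}"
      by (rule sum_mono) (rule big, simp)
    moreover have "sum (\<lambda>j. \<eta> / 64) {J<..J+N} = real N * (\<eta> / 64)" by simp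
    ultimately have "real N * (\<eta> / 64) \<le> Sm" by linarith
    then show False using N \<eta> by (simp add: field_simps)
  qed
  then obtain n where nJ: "n > J" and nsmall: "64 * norm (a n) < \<eta>" by blast
  have n1: "n \<ge> 1" using nJ by simp
  have an: "norm (a n) > 0" using pos[OF nJ] .
  define L where "L = lam n"
  have L: "L = real n / norm (a n)" unfolding L_def lam ..
  have Lpos: "L > 0" using n1 an by (simp add: L)
  have lampos: "lam j > 0" if "j > J" for j using pos[OF that] that by (simp add: lam)
  define T where "T = 24 * norm (a n)"
  have Tpos: "T > 0" using an by (simp add: T_def)
  define far where "far = filter (\<lambda>m. norm (a m) > 2 * norm (a n)) [Suc J..<n]"
  define S1 where "S1 = map (\<lambda>m. pi / (L - lam m)) far @ map (\<lambda>m. pi / (lam m + L)) [Suc J..<n]"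
  define S where "S = S1 @ [pi / L, pi / L]"
  have far_lam: "lam m < L / 2" if "m \<in> set far" for m
  proof -
    have m: "J < m" "m < n" "norm (a m) > 2 * norm (a n)" using that by (auto simp: far_def)
    have "lam m = real m / norm (a m)" by (rule lam)
    also have "\<dots> \<le> real n / norm (a m)" using m pos[of m] by (intro divide_right_mono) auto
    also have "\<dots> < real n / (2 * norm (a n))" using m an n1 pos[of m] by (intro divide_strict_left_mono) auto
    also have "\<dots> = L / 2" by (simp add: L)
    finally show ?thesis .
  qed
  have S_nonneg: "\<forall>s\<in>set S. s \<ge> 0"
  proof -
    have "pi / (L - lam m) \<ge> 0" if "m \<in> set far" for m
      using far_lam[OF that] Lpos by (intro divide_nonneg_pos) auto
    moreover have "pi / (lam m + L) \<ge> 0" if "m \<in> set [Suc J..<n]" for m using lampos[of m] that Lpos by simp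
    ultimately show ?thesis using Lpos by (auto simp: S_def S1_def)
  qed
  have sumS: "sum_list S \<le> 16 * norm (a n)"
  proof -
    have lf: "length far \<le> n" by (simp add: far_def order_trans[OF length_filter_le])
    have "sum_list (map (\<lambda>m. pi / (L - lam m)) far) \<le> real (length far) * (2 * pi / L)"
    proof (rule sum_list_map_le)
      fix m assume "m \<in> set far"
      then have "L - lam m \<ge> L / 2" using far_lam by fastforce
      then show "pi / (L - lam m) \<le> 2 * pi / L" using Lpos
        by (simp add: divide_simps)
    qed
    also have "\<dots> \<le> real n * (2 * pi / L)" using lf Lpos by (intro mult_right_mono) auto
    finally have s1: "sum_list (map (\<lambda>m. pi / (L - lam m)) far) \<le> real n * (2 * pi / L)" .
    have "sum_list (map (\<lambda>m. pi / (lam m + L)) [Suc J..<n]) \<le> real (length [Suc J..<n]) * (pi / L)"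
    proof (rule sum_list_map_le)
      fix m assume "m \<in> set [Suc J..<n]"
      then have "lam m > 0" using lampos by simp
      then show "pi / (lam m + L) \<le> pi / L" using Lpos by (intro divide_left_mono) auto
    qed
    also have "\<dots> \<le> real n * (pi / L)" using Lpos by (intro mult_right_mono) auto
    finally have s2: "sum_list (map (\<lambda>m. pi / (lam m + L)) [Suc J..<n]) \<le> real n * (pi / L)" .
    have "sum_list S \<le> real n * (2 * pi / L) + real n * (pi / L) + 2 * (pi / L)"
    proof -
      have "sum_list S = sum_list (map (\<lambda>m. pi / (L - lam m)) far) + sum_list (map (\<lambda>m. pi / (lam m + L)) [Suc J..<n]) + 2 * (pi / L)"
        by (simp add: S_def S1_def)
      then show ?thesis using s1 s2 by linarith
    qed
    also have "\<dots> = (3 * real n + 2) * pi / L" using Lpos by (simp add: field_simps)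
    also have "\<dots> = (3 * real n + 2) / real n * pi * norm (a n)" using an n1 by (simp add: L field_simps)
    also have "\<dots> \<le> 5 * pi * norm (a n)"
    proof -
      have "(3 * real n + 2) / real n \<le> 5" using n1 by (simp add: divide_simps)
      then show ?thesis using an by (intro mult_right_mono) auto
    qed
    also have "\<dots> \<le> 16 * norm (a n)" using pi_approx an by (intro mult_right_mono) auto
    finally show ?thesis .
  qed
  define span where "span = sum_list S + 2 * T"
  have span: "span \<le> 64 * norm (a n)" using sumS by (simp add: span_def T_def)
  have span_eta: "span < \<eta>" using span nsmall by linarith
  define g where "g j = \<alpha> j * cis (lam j * t0)" for j
  define g' where "g' j = \<beta> j * cis (- lam j * t0)" for j
  define \<nu> where "\<nu> j = lam j - L" for j
  define \<nu>' where "\<nu>' j = - lam j - L" for j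
  have cs: "csum X g g'"
  proof -
    have s2: "(\<lambda>j. 2 * norm (a j)) summable_on X" using summ unfolding X_def by (rule summable_on_cmult_right)
    show ?thesis unfolding csum_def
      by (rule summable_on_comparison_test[OF s2]) (auto simp: g_def g'_def norm_mult X_def, metis al bl add_mono mult_2)
  qed
  have Ft: "F (t0 + h) * cis (- L * h) = ts X g \<nu> g' \<nu>' h" for h
  proof -
    have "F (t0 + h) * cis (- L * h) = (\<Sum>\<^sub>\<infinity>j\<in>X. (\<alpha> j * cis (lam j * (t0 + h)) + \<beta> j * cis (- lam j * (t0 + h))) * cis (- L * h))"
      unfolding Fd X_def by (rule infsum_cmult_left'[symmetric])
    also have "\<dots> = ts X g \<nu> g' \<nu>' h"
      unfolding ts_def
    proof (rule infsum_cong)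
      fix j
      have e1: "cis (lam j * (t0 + h)) * cis (- L * h) = cis (lam j * t0) * cis ((lam j - L) * h)"
        by (simp add: cis_mult algebra_simps)
      have e2: "cis (- lam j * (t0 + h)) * cis (- L * h) = cis (- lam j * t0) * cis ((- lam j - L) * h)"
        unfolding cis_mult by (rule arg_cong[where f=cis]) (simp add: algebra_simps)
      show "(\<alpha> j * cis (lam j * (t0 + h)) + \<beta> j * cis (- lam j * (t0 + h))) * cis (- L * h)
          = g j * cis (\<nu> j * h) + g' j * cis (\<nu>' j * h)"
        unfolding g_def g'_def \<nu>_def \<nu>'_def distrib_right mult.assoc e1 e2 ..
    qed
    finally show ?thesis .
  qed
  define lin where "lin h = (F t0 + of_real h * D) * cis (- L * h)" for h
  define Gt where "Gt h = (F (t0 + h) - F t0 - of_real h * D) * cis (- L * h)" for h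
  have FGl: "ts X g \<nu> g' \<nu>' = (\<lambda>h. Gt h + lin h)"
    by (rule ext) (simp add: Ft[symmetric] Gt_def lin_def algebra_simps)
  have killed: "PP S lin = (\<lambda>h. 0)"
  proof -
    have c: "cis (- L * (pi / L)) = -1" using Lpos by (simp add: cis_minus_pi)
    have "PP [pi / L, pi / L] lin = (\<lambda>h. 0)"
      unfolding lin_def by (rule kill_lin[OF c])
    then show ?thesis by (simp add: S_def PP_append PP_zero)
  qed
  define W where "W = PP S (ts X g \<nu> g' \<nu>')"
  have WG: "W h = PP S Gt h" for h
    unfolding W_def FGl PP_add killed by simp
  have Gt_bound: "norm (Gt y) \<le> 1/1000 * span" if "0 \<le> y" "y \<le> span" for y
  proof -
    have "norm (Gt y) = norm (F (t0 + y) - F t0 - ((t0 + y) - t0) *\<^sub>R D)"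
      by (simp add: Gt_def norm_mult scaleR_conv_of_real)
    also have "\<dots> \<le> 1/1000 * norm ((t0 + y) - t0)"
      by (rule der) (use that span_eta in auto)
    also have "\<dots> \<le> 1/1000 * span" using that by simp
    finally show ?thesis .
  qed
  have W_bound: "norm (W x) \<le> 2 ^ length S * (1/1000 * span)" if "0 \<le> x" "x \<le> 2 * T" for x
    unfolding WG
    by (rule PP_bound[OF S_nonneg]) (rule Gt_bound, use that in \<open>auto simp: span_def\<close>)
  define g1 where "g1 j = g j * Pm S (\<nu> j)" for j
  define g1' where "g1' j = g' j * Pm S (\<nu>' j)" for j
  have cs1: "csum X g1 g1'" unfolding g1_def g1'_def by (rule csum_Pm[OF cs])
  have W_ts: "W = ts X g1 \<nu> g1' \<nu>'" unfolding W_def g1_def g1'_def by (rule PP_ts[OF cs])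
  define g2 where "g2 j = g1 j * mm (\<nu> j * T)" for j
  define g2' where "g2' j = g1' j * mm (\<nu>' j * T)" for j
  have cs2: "csum X g2 g2'" unfolding g2_def g2'_def by (rule csum_Av[OF cs1])
  define A1 where "A1 h = integral {0..T} (\<lambda>x. W (h + x)) / of_real T" for h
  have A1_ts: "A1 = ts X g2 \<nu> g2' \<nu>'"
  proof -
    have e: "g2 = (\<lambda>j. g1 j * mm (\<nu> j * T))" "g2' = (\<lambda>j. g1' j * mm (\<nu>' j * T))"
      by (simp_all add: fun_eq_iff g2_def g2'_def)
    show ?thesis unfolding e by (simp add: fun_eq_iff A1_def W_ts ts_Av[OF cs1 Tpos])
  qed
  have A1_bound: "norm (A1 y) \<le> 2 ^ length S * (1/1000 * span)" if "0 \<le> y" "y \<le> T" for y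
    unfolding A1_def
  proof (rule av_bound[OF _ Tpos])
    show "continuous_on UNIV W" unfolding W_ts by (rule ts_cont[OF cs1])
  next
    fix x assume "y \<le> x" "x \<le> y + T"
    then show "norm (W x) \<le> 2 ^ length S * (1/1000 * span)" using that by (intro W_bound) auto
  qed
  define g3 where "g3 j = g2 j * mm (\<nu> j * T)" for j
  define g3' where "g3' j = g2' j * mm (\<nu>' j * T)" for j
  have cs3: "csum X g3 g3'" unfolding g3_def g3'_def by (rule csum_Av[OF cs2])
  define V where "V = integral {0..T} (\<lambda>x. A1 (0 + x)) / of_real T"
  have V_ts: "V = ts X g3 \<nu> g3' \<nu>' 0"
  proof -
    have e: "g3 = (\<lambda>j. g2 j * mm (\<nu> j * T))" "g3' = (\<lambda>j. g2' j * mm (\<nu>' j * T))"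
      by (simp_all add: fun_eq_iff g3_def g3'_def)
    show ?thesis unfolding e V_def A1_ts using ts_Av[OF cs2 Tpos, where h=0] by simp
  qed
  have V_bound: "norm V \<le> 2 ^ length S * (1/1000 * span)"
    unfolding V_def
  proof (rule av_bound[OF _ Tpos])
    show "continuous_on UNIV A1" unfolding A1_ts by (rule ts_cont[OF cs2])
  next
    fix x assume "0 \<le> x" "x \<le> 0 + T"
    then show "norm (A1 x) \<le> 2 ^ length S * (1/1000 * span)" by (intro A1_bound) auto
  qed
  have nX: "n \<in> X" using nJ by (simp add: X_def)
  define K where "K = 2 ^ length S * norm (a n) / 144"
  have K0: "K > 0" using an by (simp add: K_def)
  have g3_eq: "g3 j = g j * Pm S (\<nu> j) * mm (\<nu> j * T) * mm (\<nu> j * T)" for j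
    by (simp add: g3_def g2_def g1_def)
  have g3'_eq: "g3' j = g' j * Pm S (\<nu>' j) * mm (\<nu>' j * T) * mm (\<nu>' j * T)" for j
    by (simp add: g3'_def g2'_def g1'_def)
  have lam_ge: "lam j \<ge> real j / norm (a n)" if "j \<ge> n" for j
  proof -
    have "norm (a j) \<le> norm (a n)" using anti[OF nJ that] .
    moreover have "norm (a j) > 0" using pos[of j] that nJ by simp
    ultimately show ?thesis unfolding lam using an by (intro divide_left_mono) auto
  qed
  have lam_le: "lam j \<le> real j / norm (a n)" if "J < j" "j \<le> n" for j
  proof -
    have "norm (a n) \<le> norm (a j)" using anti[OF that] .
    then show ?thesis unfolding lam using an pos[of j] that by (intro divide_left_mono) auto
  qed
  have nuT: "(\<nu> j * T)\<^sup>2 \<ge> 576 * (real j - real n)\<^sup>2" if "j \<in> X" for j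
  proof -
    have "\<bar>\<nu> j\<bar> * norm (a n) \<ge> \<bar>real j - real n\<bar>"
    proof (cases "j \<ge> n")
      case True
      have "\<nu> j \<ge> (real j - real n) / norm (a n)"
        using lam_ge[OF True] by (simp add: \<nu>_def L diff_divide_distrib)
      then have "\<nu> j * norm (a n) \<ge> real j - real n" using an by (simp add: pos_divide_le_eq)
      moreover have "\<nu> j * norm (a n) \<le> \<bar>\<nu> j\<bar> * norm (a n)" by (intro mult_right_mono) auto
      ultimately show ?thesis using True by simp
    next
      case False
      have "- \<nu> j \<ge> (real n - real j) / norm (a n)"
        using lam_le[of j] that False by (simp add: \<nu>_def L diff_divide_distrib X_def)
      then have "- \<nu> j * norm (a n) \<ge> real n - real j" using an by (simp add: pos_divide_le_eq)
      moreover have "- \<nu> j * norm (a n) \<le> \<bar>\<nu> j\<bar> * norm (a n)" by (intro mult_right_mono) auto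
      ultimately show ?thesis using False by simp
    qed
    then have "\<bar>\<nu> j * T\<bar> \<ge> 24 * \<bar>real j - real n\<bar>" using an by (simp add: T_def abs_mult)
    then have "(24 * \<bar>real j - real n\<bar>)\<^sup>2 \<le> \<bar>\<nu> j * T\<bar>\<^sup>2" by (intro power_mono) auto
    then show ?thesis by (simp add: power_mult_distrib)
  qed
  have nu'T: "(\<nu>' j * T)\<^sup>2 \<ge> 576 * (real j + real n)\<^sup>2" if "j \<ge> n" for j
  proof -
    have "lam j + L \<ge> (real j + real n) / norm (a n)"
      using lam_ge[OF that] by (simp add: L add_divide_distrib)
    then have "(lam j + L) * norm (a n) \<ge> real j + real n" using an by (simp add: pos_divide_le_eq)
    then have "\<bar>\<nu>' j * T\<bar> \<ge> 24 * (real j + real n)" using an by (simp add: T_def abs_mult \<nu>'_def algebra_simps)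
    then have h: "(24 * (real j + real n))\<^sup>2 \<le> \<bar>\<nu>' j * T\<bar>\<^sup>2" by (intro power_mono) auto
    have e1: "(24 * (real j + real n))\<^sup>2 = 576 * (real j + real n)\<^sup>2" by (simp only: power_mult_distrib) simp
    have e2: "\<bar>\<nu>' j * T\<bar>\<^sup>2 = (\<nu>' j * T)\<^sup>2" by simp
    show ?thesis using h e1 e2 by linarith
  qed
  have g3_low: "norm (g3 j) \<le> K * (2 / (real j - real n)\<^sup>2)" if "j \<in> X" "j \<noteq> n" for j
  proof (cases "j < n \<and> norm (a j) > 2 * norm (a n)")
    case True
    then have jf: "j \<in> set far" using that by (auto simp: far_def X_def)
    have mem: "pi / (L - lam j) \<in> set S" using jf by (auto simp: S_def S1_def)
    have ne: "L - lam j \<noteq> 0" using far_lam[OF jf] Lpos by simp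
    have "\<nu> j * (pi / (L - lam j)) = - pi" using ne by (simp add: \<nu>_def field_simps)
    then have "Pm S (\<nu> j) = 0" using Pm_zero[OF mem] cis_minus_pi by simp
    then show ?thesis using K0 by (simp add: g3_eq)
  next
    case False
    have jJ: "j > J" using that by (simp add: X_def)
    have aj: "norm (a j) \<le> 2 * norm (a n)"
    proof (cases "j < n")
      case True then show ?thesis using False by simp
    next
      case False
      then have "norm (a j) \<le> norm (a n)" using anti[OF nJ] by simp
      then show ?thesis using an by linarith
    qed
    have A: "norm (g j) \<le> 2 * norm (a n)"
      using al[OF jJ] aj by (simp add: g_def norm_mult)
    have d: "\<bar>real j - real n\<bar> > 0" using that(2) by simp
    have "norm (g3 j) \<le> 2 * norm (a n) * 2 ^ length S / (144 * \<bar>real j - real n\<bar>\<^sup>2)"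
      unfolding g3_eq by (rule gen_bound[OF A Pm_norm]) (use nuT[OF that(1)] d in auto)
    also have "\<dots> = K * (2 / (real j - real n)\<^sup>2)" by (simp add: K_def power2_abs)
    finally show ?thesis .
  qed
  have g3'_low: "norm (g3' j) \<le> K * (1 / (real j + real n)\<^sup>2)" if "j \<in> X" for j
  proof (cases "j < n")
    case True
    then have jl: "j \<in> set [Suc J..<n]" using that by (auto simp: X_def)
    have mem: "pi / (lam j + L) \<in> set S" using jl by (auto simp: S_def S1_def)
    have ne: "lam j + L \<noteq> 0" using lampos[of j] that Lpos by (simp add: X_def)
    have "\<nu>' j * (pi / (lam j + L)) = - pi" using ne by (simp add: \<nu>'_def field_simps)
    then have "Pm S (\<nu>' j) = 0" using Pm_zero[OF mem] cis_minus_pi by simp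
    then show ?thesis using K0 by (simp add: g3'_eq)
  next
    case False
    have jJ: "j > J" using that by (simp add: X_def)
    have A: "norm (g' j) \<le> norm (a n)"
      using bl[OF jJ] anti[OF nJ, of j] False by (simp add: g'_def norm_mult)
    have d: "real j + real n > 0" using n1 by simp
    have "norm (g3' j) \<le> norm (a n) * 2 ^ length S / (144 * (real j + real n)\<^sup>2)"
      unfolding g3'_eq by (rule gen_bound[OF A Pm_norm]) (use nu'T False d in auto)
    also have "\<dots> = K * (1 / (real j + real n)\<^sup>2)" by (simp add: K_def)
    finally show ?thesis .
  qed
  define u where "u j = g3 j * cis (\<nu> j * 0) + g3' j * cis (\<nu>' j * 0)" for j
  have usum: "u summable_on X" unfolding u_def by (rule ts_term_summable[OF cs3])
  have u_simp: "u j = g3 j + g3' j" for j by (simp add: u_def)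
  have ue: "u = (\<lambda>j. g3 j + g3' j)" by (simp add: fun_eq_iff u_simp)
  have Vu: "V = infsum u X" unfolding ue by (simp add: V_ts ts_def)
  define B where "B j = K * ww n j" for j
  have Bsum: "B summable_on X" unfolding B_def by (rule summable_on_cmult_right[OF ww_summable(1)[OF n1]])
  have BX: "infsum B X \<le> K * 10"
  proof -
    have "infsum B X = K * infsum (ww n) X" unfolding B_def by (rule infsum_cmult_right')
    also have "\<dots> \<le> K * 10" using ww_summable(2)[OF n1, of X] K0 by (intro mult_left_mono) auto
    finally show ?thesis .
  qed
  have Bn: "norm (g3' n) \<le> B n" using g3'_low[OF nX] by (simp add: B_def ww_def)
  have Bj: "norm (u j) \<le> B j" if "j \<in> X - {n}" for j
  proof -
    have "norm (u j) \<le> norm (g3 j) + norm (g3' j)" unfolding u_simp by (rule norm_triangle_ineq)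
    also have "\<dots> \<le> K * (2 / (real j - real n)\<^sup>2) + K * (1 / (real j + real n)\<^sup>2)"
      using that by (intro add_mono g3_low g3'_low) auto
    also have "\<dots> = B j" using that by (simp add: B_def ww_def algebra_simps)
    finally show ?thesis .
  qed
  have XI: "insert n (X - {n}) = X" using nX by blast
  have us': "u summable_on (X - {n})" by (rule summable_on_subset_banach[OF usum]) auto
  have Bs': "B summable_on (X - {n})" by (rule summable_on_subset_banach[OF Bsum]) auto
  have Vsplit: "V = u n + infsum u (X - {n})"
    using infsum_insert[OF us', of n] XI Vu by simp
  have Bsplit: "infsum B X = B n + infsum B (X - {n})"
    using infsum_insert[OF Bs', of n] XI by simp
  have rest: "norm (infsum u (X - {n})) \<le> infsum B (X - {n})"
    by (rule norm_infsum_le[OF has_sum_infsum[OF us'] has_sum_infsum[OF Bs'] Bj])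
  have g3n: "g3 n = g n * 2 ^ length S"
    by (simp add: g3_eq \<nu>_def L_def Pm_at0)
  define P where "P = 2 ^ length S * norm (a n)"
  have KP: "K = P / 144" by (simp add: K_def P_def)
  have main: "norm (g3 n) \<ge> P / 2"
  proof -
    have "norm (g3 n) = norm (\<alpha> n) * 2 ^ length S" by (simp add: g3n g_def norm_mult norm_power)
    moreover have "norm (a n) \<le> 2 * norm (\<alpha> n)" by (rule ag[OF nJ])
    ultimately show ?thesis by (simp add: P_def)
  qed
  have "norm V \<ge> norm (g3 n) - norm (g3' n) - norm (infsum u (X - {n}))"
  proof -
    have "V = g3 n + g3' n + infsum u (X - {n})" using Vsplit by (simp add: u_simp)
    moreover have "norm (g3 n) \<le> norm (g3 n + g3' n + infsum u (X - {n})) + norm (g3' n) + norm (infsum u (X - {n}))"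
      using norm_triangle_ineq4[of "g3 n + g3' n + infsum u (X - {n})" "g3' n + infsum u (X - {n})"]
        norm_triangle_ineq[of "g3' n" "infsum u (X - {n})"] by (simp add: algebra_simps)
    ultimately show ?thesis by simp
  qed
  then have lowV: "norm V \<ge> P / 2 - K * 10" using main Bn rest Bsplit BX by linarith
  have upV: "norm V \<le> 2 ^ length S * (1/1000 * (64 * norm (a n)))"
  proof -
    have "1/1000 * span \<le> 1/1000 * (64 * norm (a n))" using span by simp
    then have "2 ^ length S * (1/1000 * span) \<le> 2 ^ length S * (1/1000 * (64 * norm (a n)))"
      by (intro mult_left_mono) auto
    then show ?thesis using V_bound by linarith
  qed
  have upV': "norm V \<le> P * (64 / 1000)" using upV by (simp add: P_def)
  have "P > 0" using an by (simp add: P_def)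
  then show False using lowV upV' KP by linarith
qed


theorem corollary4p1:
  fixes J :: nat and a :: "nat \<Rightarrow> complex" and \<phi> :: "real \<Rightarrow> real"
  assumes summ: "(\<lambda>j. norm (a j)) summable_on {J<..}"
    and mono: "\<And>j. j > J \<Longrightarrow> norm (a j) \<ge> norm (a (Suc j)) \<and> norm (a (Suc j)) > 0"
    and conv: "convex_on {real J<..} \<phi>"
    and phi: "\<And>j. j > J \<Longrightarrow> \<phi> (real j) = real j / norm (a j)"
  shows "continuous_on UNIV (nd_series J a) \<and> (\<forall>t. \<not> (nd_series J a) differentiable (at t))
      \<and> continuous_on UNIV (\<lambda>t. Re (nd_series J a t)) \<and> (\<forall>t. \<not> (\<lambda>t. Re (nd_series J a t)) differentiable (at t))
      \<and> continuous_on UNIV (\<lambda>t. Im (nd_series J a t)) \<and> (\<forall>t. \<not> (\<lambda>t. Im (nd_series J a t)) differentiable (at t))"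
proof -
  define X where "X = {J<..}"
  define lam where "lam j = real j / norm (a j)" for j
  have lamE: "\<And>j. lam j = real j / norm (a j)" by (simp add: lam_def)
  have nd: "nd_series J a t = (\<Sum>\<^sub>\<infinity>j\<in>X. a j * cis (lam j * t))" for t
    unfolding nd_series_def X_def lam_def cis_conv_exp by (simp add: algebra_simps)
  have csa: "csum X a (\<lambda>_. 0)" using summ by (simp add: csum_def X_def)
  have nd_ts: "nd_series J a = ts X a lam (\<lambda>_. 0) (\<lambda>j. - lam j)"
    by (simp add: fun_eq_iff nd ts_def)
  have cont: "continuous_on UNIV (nd_series J a)" unfolding nd_ts by (rule ts_cont[OF csa])
  have csum1: "(\<lambda>j. a j * cis (lam j * t)) summable_on X" for t
    using ts_term_summable[OF csa, of lam t "\<lambda>j. - lam j"] by simp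
  have ndiff: "\<not> (nd_series J a) differentiable (at t)" for t
  proof (rule core[OF summ mono lamE])
    show "nd_series J a s = (\<Sum>\<^sub>\<infinity>j\<in>{J<..}. a j * cis (lam j * s) + 0 * cis (- lam j * s))" for s
      by (simp add: nd X_def)
  qed auto
  have Re_eq: "of_real (Re (nd_series J a s)) =
      (\<Sum>\<^sub>\<infinity>j\<in>{J<..}. a j / 2 * cis (lam j * s) + cnj (a j) / 2 * cis (- lam j * s))" for s
  proof -
    have c2: "(\<lambda>j. cnj (a j * cis (lam j * s))) summable_on X"
      using csum1[of s] summable_on_cnj_iff[of "\<lambda>j. a j * cis (lam j * s)" X] by (simp del: complex_cnj_mult)
    have "(\<Sum>\<^sub>\<infinity>j\<in>{J<..}. a j / 2 * cis (lam j * s) + cnj (a j) / 2 * cis (- lam j * s))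
        = (\<Sum>\<^sub>\<infinity>j\<in>X. a j * cis (lam j * s) * (1/2) + cnj (a j * cis (lam j * s)) * (1/2))"
      unfolding X_def by (rule infsum_cong) (simp add: cis_cnj)
    also have "\<dots> = (\<Sum>\<^sub>\<infinity>j\<in>X. a j * cis (lam j * s) * (1/2)) + (\<Sum>\<^sub>\<infinity>j\<in>X. cnj (a j * cis (lam j * s)) * (1/2))"
      by (rule infsum_add[OF summable_on_cmult_left[OF csum1] summable_on_cmult_left[OF c2]])
    also have "\<dots> = (\<Sum>\<^sub>\<infinity>j\<in>X. a j * cis (lam j * s)) * (1/2) + (\<Sum>\<^sub>\<infinity>j\<in>X. cnj (a j * cis (lam j * s))) * (1/2)"
      by (simp only: infsum_cmult_left')
    also have "\<dots> = of_real (Re (nd_series J a s))"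
      unfolding infsum_cnj nd[symmetric] by (simp add: complex_eq_iff)
    finally show ?thesis by simp
  qed
  have Im_eq: "of_real (Im (nd_series J a s)) =
      (\<Sum>\<^sub>\<infinity>j\<in>{J<..}. a j / (2 * \<i>) * cis (lam j * s) + - cnj (a j) / (2 * \<i>) * cis (- lam j * s))" for s
  proof -
    have c2: "(\<lambda>j. cnj (a j * cis (lam j * s))) summable_on X"
      using csum1[of s] summable_on_cnj_iff[of "\<lambda>j. a j * cis (lam j * s)" X] by (simp del: complex_cnj_mult)
    have "(\<Sum>\<^sub>\<infinity>j\<in>{J<..}. a j / (2 * \<i>) * cis (lam j * s) + - cnj (a j) / (2 * \<i>) * cis (- lam j * s))
        = (\<Sum>\<^sub>\<infinity>j\<in>X. a j * cis (lam j * s) * (1 / (2 * \<i>)) + cnj (a j * cis (lam j * s)) * (- 1 / (2 * \<i>)))"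
      unfolding X_def by (rule infsum_cong) (simp add: cis_cnj mult_ac)
    also have "\<dots> = (\<Sum>\<^sub>\<infinity>j\<in>X. a j * cis (lam j * s) * (1 / (2 * \<i>))) + (\<Sum>\<^sub>\<infinity>j\<in>X. cnj (a j * cis (lam j * s)) * (- 1 / (2 * \<i>)))"
      by (rule infsum_add[OF summable_on_cmult_left[OF csum1] summable_on_cmult_left[OF c2]])
    also have "\<dots> = (\<Sum>\<^sub>\<infinity>j\<in>X. a j * cis (lam j * s)) * (1 / (2 * \<i>)) + (\<Sum>\<^sub>\<infinity>j\<in>X. cnj (a j * cis (lam j * s))) * (- 1 / (2 * \<i>))"
      by (simp only: infsum_cmult_left')
    also have "\<dots> = of_real (Im (nd_series J a s))"
      unfolding infsum_cnj nd[symmetric] by (simp add: complex_eq_iff)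
    finally show ?thesis by simp
  qed
  have lift: "(\<lambda>s. complex_of_real (R s)) differentiable (at t)" if "R differentiable (at t)" for R :: "real \<Rightarrow> real" and t
  proof -
    have "(complex_of_real \<circ> R) differentiable (at t)"
      by (rule differentiable_chain_at[OF that]) (rule bounded_linear_imp_differentiable[OF bounded_linear_of_real])
    then show ?thesis by (simp add: o_def)
  qed
  have Rndiff: "\<not> (\<lambda>t. Re (nd_series J a t)) differentiable (at t)" for t
  proof
    assume "(\<lambda>t. Re (nd_series J a t)) differentiable (at t)"
    then have "(\<lambda>s. complex_of_real (Re (nd_series J a s))) differentiable (at t)" by (rule lift)
    moreover have "\<not> (\<lambda>s. complex_of_real (Re (nd_series J a s))) differentiable (at t)"
    proof (rule core[OF summ mono lamE, where \<alpha>="\<lambda>j. a j / 2" and \<beta>="\<lambda>j. cnj (a j) / 2"])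
      show "complex_of_real (Re (nd_series J a s)) = (\<Sum>\<^sub>\<infinity>j\<in>{J<..}. a j / 2 * cis (lam j * s) + cnj (a j) / 2 * cis (- lam j * s))" for s
        by (rule Re_eq)
    qed (auto simp: norm_divide)
    ultimately show False by contradiction
  qed
  have Indiff: "\<not> (\<lambda>t. Im (nd_series J a t)) differentiable (at t)" for t
  proof
    assume "(\<lambda>t. Im (nd_series J a t)) differentiable (at t)"
    then have "(\<lambda>s. complex_of_real (Im (nd_series J a s))) differentiable (at t)" by (rule lift)
    moreover have "\<not> (\<lambda>s. complex_of_real (Im (nd_series J a s))) differentiable (at t)"
    proof (rule core[OF summ mono lamE, where \<alpha>="\<lambda>j. a j / (2 * \<i>)" and \<beta>="\<lambda>j. - cnj (a j) / (2 * \<i>)"])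
      show "complex_of_real (Im (nd_series J a s)) = (\<Sum>\<^sub>\<infinity>j\<in>{J<..}. a j / (2 * \<i>) * cis (lam j * s) + - cnj (a j) / (2 * \<i>) * cis (- lam j * s))" for s
        by (rule Im_eq)
    qed (auto simp: norm_divide norm_mult)
    ultimately show False by contradiction
  qed
  have contR: "continuous_on UNIV (\<lambda>t. Re (nd_series J a t))"
    using cont by (intro continuous_intros)
  have contI: "continuous_on UNIV (\<lambda>t. Im (nd_series J a t))"
    using cont by (intro continuous_intros)
  show ?thesis using cont ndiff contR Rndiff contI Indiff by blast
qed


end
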